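(* Let $V$ be a finite set, $\lambda\in\mathbb{C}$, and $A\subseteq V$ with $|A|\ge2$. Then $\big(f_A^{(\lambda)}\big)^2=0$.
   Context: For each $i\in V$ let $\psi_i,\bar\psi_i$ be anticommuting generators of a Grassmann algebra over $\mathbb{C}$. For $A\subseteq V$, $\tau_A=\prod_{i\in A}\bar\psi_i\psi_i$ ($\tau_\emptyset=1$), and $f_A^{(\lambda)}=\lambda(1-|A|)\tau_A+\sum_{i\in A}\tau_{A\setminus\{i\}}-\sum_{i,j\in A,\ i\neq j}\bar\psi_i\psi_j\,\tau_{A\setminus\{i,j\}}$. *)

theory Defs
  imports Complex_Main "HOL-Library.Product_Lexorder"
begin

text \<open>Grassmann algebra over the complex numbers with a linearly ordered set of
generators of type 'g. An element is represented by its coefficient function on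
monomials: a monomial is a finite set of generators, written as the product of
its generators in increasing order. (Infinite sets carry coefficient 0 for all
elements built below.)\<close>

type_synonym 'g grass = "'g set \<Rightarrow> complex"

definition gsign :: "'g::linorder set \<Rightarrow> 'g set \<Rightarrow> complex" where
  "gsign S T = (-1) ^ card {(s, t). s \<in> S \<and> t \<in> T \<and> t < s}"

definition g_zero :: "'g grass" where "g_zero = (\<lambda>U. 0)"
definition g_one :: "'g grass" where "g_one = (\<lambda>U. if U = {} then 1 else 0)"
definition g_gen :: "'g \<Rightarrow> 'g grass" where "g_gen g = (\<lambda>U. if U = {g} then 1 else 0)"
definition g_add :: "'g grass \<Rightarrow> 'g grass \<Rightarrow> 'g grass" where
  "g_add x y = (\<lambda>U. x U + y U)"
definition g_diff :: "'g grass \<Rightarrow> 'g grass \<Rightarrow> 'g grass" where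
  "g_diff x y = (\<lambda>U. x U - y U)"
definition g_smul :: "complex \<Rightarrow> 'g grass \<Rightarrow> 'g grass" where
  "g_smul c x = (\<lambda>U. c * x U)"
definition g_sum :: "('i \<Rightarrow> 'g grass) \<Rightarrow> 'i set \<Rightarrow> 'g grass" where
  "g_sum f I = (\<lambda>U. \<Sum>i\<in>I. f i U)"

text \<open>Product: the coefficient of monomial U is the sum over splittings U = S \<union> (U - S)
with the sign of the shuffle bringing S followed by U - S into increasing order.\<close>
definition g_mul :: "'g::linorder grass \<Rightarrow> 'g grass \<Rightarrow> 'g grass" where
  "g_mul x y = (\<lambda>U. \<Sum>S\<in>Pow U. gsign S (U - S) * x S * y (U - S))"

definition psi :: "'a::linorder \<Rightarrow> ('a \<times> bool) grass" where
  "psi i = g_gen (i, False)"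
definition psibar :: "'a::linorder \<Rightarrow> ('a \<times> bool) grass" where
  "psibar i = g_gen (i, True)"

definition tau :: "'a::linorder set \<Rightarrow> ('a \<times> bool) grass" where
  "tau A = foldr (\<lambda>i acc. g_mul (g_mul (psibar i) (psi i)) acc) (sorted_list_of_set A) g_one"

definition fA :: "complex \<Rightarrow> 'a::linorder set \<Rightarrow> ('a \<times> bool) grass" where
  "fA lam A = g_diff
     (g_add (g_smul (lam * (1 - of_nat (card A))) (tau A))
            (g_sum (\<lambda>i. tau (A - {i})) A))
     (g_sum (\<lambda>(i, j). g_mul (g_mul (psibar i) (psi j)) (tau (A - {i, j})))
            {(i, j). i \<in> A \<and> j \<in> A \<and> i \<noteq> j})"

end

theory Submission
  imports Defs
begin


definition supp :: "'g set \<Rightarrow> nat \<Rightarrow> 'g grass \<Rightarrow> bool" where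
  "supp W p x \<longleftrightarrow> (\<forall>U. x U \<noteq> 0 \<longrightarrow> U \<subseteq> W \<and> finite U \<and> p \<le> card U)"

lemma supp_mono: "supp W p x \<Longrightarrow> W \<subseteq> W' \<Longrightarrow> p' \<le> p \<Longrightarrow> supp W' p' x"
  unfolding supp_def by fastforce

lemma supp_add: "supp W p x \<Longrightarrow> supp W p y \<Longrightarrow> supp W p (g_add x y)"
  unfolding supp_def g_add_def by (metis add.right_neutral add_0)

lemma supp_diff: "supp W p x \<Longrightarrow> supp W p y \<Longrightarrow> supp W p (g_diff x y)"
  unfolding supp_def g_diff_def by (metis diff_zero diff_self)

lemma supp_smul: "supp W p x \<Longrightarrow> supp W p (g_smul c x)"
  unfolding supp_def g_smul_def by fastforce

lemma supp_sum: "(\<And>k. k \<in> I \<Longrightarrow> supp W p (f k)) \<Longrightarrow> supp W p (g_sum f I)"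
  unfolding supp_def g_sum_def
  by (metis (mono_tags, lifting) sum.neutral)

lemma supp_gen: "supp {g} 1 (g_gen g)"
  unfolding supp_def g_gen_def by auto

lemma supp_one: "supp {} 0 g_one"
  unfolding supp_def g_one_def by auto

lemma supp_mul:
  fixes x y :: "'g::linorder grass"
  assumes "supp W p x" "supp W q y"
  shows "supp W (p+q) (g_mul x y)"
  unfolding supp_def
proof (intro allI impI)
  fix U assume nz: "g_mul x y U \<noteq> 0"
  then obtain S where S: "S \<in> Pow U" "gsign S (U - S) * x S * y (U - S) \<noteq> 0"
    unfolding g_mul_def by (meson sum.not_neutral_contains_not_neutral)
  then have xs: "x S \<noteq> 0" and ys: "y (U - S) \<noteq> 0" by auto
  from xs assms(1) have 1: "S \<subseteq> W" "finite S" "p \<le> card S" unfolding supp_def by auto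
  from ys assms(2) have 2: "U - S \<subseteq> W" "finite (U - S)" "q \<le> card (U - S)" unfolding supp_def by auto
  have U: "U = S \<union> (U - S)" using S by auto
  have fU: "finite U" using 1 2 U by (metis finite_Un)
  have "card U = card S + card (U - S)" using U 1 2
    by (metis Diff_disjoint card_Un_disjoint)
  then show "U \<subseteq> W \<and> finite U \<and> p + q \<le> card U" using 1 2 U fU by auto
qed

lemma supp_foldr:
  "supp (set l \<times> UNIV) (2 * length l)
     (foldr (\<lambda>i acc. g_mul (g_mul (psibar i) (psi i)) acc) l g_one)"
proof (induction l)
  case Nil
  then show ?case using supp_mono[OF supp_one] by auto
next
  case (Cons a l)
  let ?W = "set (a # l) \<times> (UNIV::bool set)"
  have b: "supp ?W 1 (psibar a)" unfolding psibar_def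
    by (rule supp_mono[OF supp_gen]) auto
  have c: "supp ?W 1 (psi a)" unfolding psi_def
    by (rule supp_mono[OF supp_gen]) auto
  have d: "supp ?W (2 * length l) (foldr (\<lambda>i acc. g_mul (g_mul (psibar i) (psi i)) acc) l g_one)"
    by (rule supp_mono[OF Cons.IH]) auto
  have "supp ?W (1 + 1 + 2 * length l) (foldr (\<lambda>i acc. g_mul (g_mul (psibar i) (psi i)) acc) (a#l) g_one)"
    using supp_mul[OF supp_mul[OF b c] d] by simp
  then show ?case by simp
qed

lemma supp_tau: "finite A \<Longrightarrow> supp (A \<times> UNIV) (2 * card A) (tau A)"
  unfolding tau_def using supp_foldr[of "sorted_list_of_set A"] by simp

lemma supp_fA:
  assumes fin: "finite A" and n: "card A \<ge> 2"
  shows "supp (A \<times> UNIV) (2 * card A - 2) (fA lam A)"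
proof -
  let ?W = "A \<times> (UNIV::bool set)"
  have t1: "supp ?W (2 * card A - 2) (g_smul (lam * (1 - of_nat (card A))) (tau A))"
    by (rule supp_smul, rule supp_mono[OF supp_tau[OF fin]]) auto
  have t2: "supp ?W (2 * card A - 2) (g_sum (\<lambda>i. tau (A - {i})) A)"
  proof (rule supp_sum)
    fix i assume i: "i \<in> A"
    have "card (A - {i}) = card A - 1" using i fin by simp
    then show "supp ?W (2 * card A - 2) (tau (A - {i}))"
      by (intro supp_mono[OF supp_tau]) (use fin in auto)
  qed
  have t3: "supp ?W (2 * card A - 2) (g_sum (\<lambda>(i, j). g_mul (g_mul (psibar i) (psi j)) (tau (A - {i, j})))
            {(i, j). i \<in> A \<and> j \<in> A \<and> i \<noteq> j})"
  proof (rule supp_sum)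
    fix k assume "k \<in> {(i, j). i \<in> A \<and> j \<in> A \<and> i \<noteq> j}"
    then obtain i j where k: "k = (i, j)" "i \<in> A" "j \<in> A" "i \<noteq> j" by auto
    have cd: "card (A - {i, j}) = card A - 2" using k fin
      by (simp add: card_Diff_subset)
    have b: "supp ?W 1 (psibar i)" unfolding psibar_def
      by (rule supp_mono[OF supp_gen]) (use k in auto)
    have c: "supp ?W 1 (psi j)" unfolding psi_def
      by (rule supp_mono[OF supp_gen]) (use k in auto)
    have d: "supp ?W (2 * (card A - 2)) (tau (A - {i, j}))"
      by (rule supp_mono[OF supp_tau]) (use fin cd in auto)
    have "supp ?W (1 + 1 + 2 * (card A - 2)) (g_mul (g_mul (psibar i) (psi j)) (tau (A - {i, j})))"
      by (rule supp_mul[OF supp_mul[OF b c] d])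
    then show "supp ?W (2 * card A - 2) ((\<lambda>(i, j). g_mul (g_mul (psibar i) (psi j)) (tau (A - {i, j}))) k)"
      using k n by (auto elim: supp_mono)
  qed
  show ?thesis unfolding fA_def by (intro supp_diff supp_add t1 t2 t3)
qed

lemma big_case:
  assumes fin: "finite A" and n: "card A \<ge> 3"
  shows "g_mul (fA lam A) (fA lam A) = g_zero"
proof
  fix U
  have s: "supp (A \<times> UNIV) ((2 * card A - 2) + (2 * card A - 2)) (g_mul (fA lam A) (fA lam A))"
    using supp_mul supp_fA fin n by fastforce
  show "g_mul (fA lam A) (fA lam A) U = g_zero U"
  proof (rule ccontr)
    assume "g_mul (fA lam A) (fA lam A) U \<noteq> g_zero U"
    then have "U \<subseteq> A \<times> UNIV" "(2 * card A - 2) + (2 * card A - 2) \<le> card U"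
      using s unfolding supp_def g_zero_def by auto
    moreover have "card U \<le> card (A \<times> (UNIV::bool set))"
      using calculation(1) fin by (intro card_mono) auto
    moreover have "card (A \<times> (UNIV::bool set)) = 2 * card A" using fin
      by (simp add: card_cartesian_product)
    ultimately show False using n by linarith
  qed
qed



definition e :: "'g set \<Rightarrow> 'g grass" where "e S = (\<lambda>U. if U = S then 1 else 0)"

lemma gen_e: "g_gen g = e {g}" unfolding g_gen_def e_def by simp
lemma one_e: "g_one = e {}" unfolding g_one_def e_def by simp

lemma mul_e:
  fixes S T :: "'g::linorder set"
  assumes fS: "finite S" and fT: "finite T"
  shows "g_mul (e S) (e T) = (if S \<inter> T = {} then g_smul (gsign S T) (e (S \<union> T)) else g_zero)"
proof
  fix U
  have 1: "g_mul (e S) (e T) U = (\<Sum>S'\<in>Pow U. if S' = S then gsign S (U - S) * (if U - S = T then 1 else 0) else 0)"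
    unfolding g_mul_def e_def by (intro sum.cong) auto
  show "g_mul (e S) (e T) U = (if S \<inter> T = {} then g_smul (gsign S T) (e (S \<union> T)) else g_zero) U"
  proof (cases "finite U")
    case True
    have "g_mul (e S) (e T) U = (if S \<in> Pow U then gsign S (U - S) * (if U - S = T then 1 else 0) else 0)"
      unfolding 1 using True by (intro sum.delta) simp
    also have "\<dots> = (if S \<inter> T = {} then g_smul (gsign S T) (e (S \<union> T)) else g_zero) U"
      unfolding g_smul_def e_def g_zero_def by auto
    finally show ?thesis .
  next
    case False
    then have "g_mul (e S) (e T) U = 0" unfolding g_mul_def by simp
    moreover have "U \<noteq> S \<union> T" using False fS fT by auto
    ultimately show ?thesis unfolding g_smul_def e_def g_zero_def by auto
  qed
qed

lemma mul_add_l: "g_mul (g_add x y) z = g_add (g_mul x z) (g_mul y z)"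
  unfolding g_mul_def g_add_def by (auto simp: algebra_simps sum.distrib)
lemma mul_add_r: "g_mul z (g_add x y) = g_add (g_mul z x) (g_mul z y)"
  unfolding g_mul_def g_add_def by (auto simp: algebra_simps sum.distrib)
lemma mul_diff_l: "g_mul (g_diff x y) z = g_diff (g_mul x z) (g_mul y z)"
  unfolding g_mul_def g_diff_def by (auto simp: algebra_simps sum_subtractf)
lemma mul_diff_r: "g_mul z (g_diff x y) = g_diff (g_mul z x) (g_mul z y)"
  unfolding g_mul_def g_diff_def by (auto simp: algebra_simps sum_subtractf)
lemma mul_smul_l: "g_mul (g_smul c x) z = g_smul c (g_mul x z)"
  unfolding g_mul_def g_smul_def by (auto simp: algebra_simps sum_distrib_left)
lemma mul_smul_r: "g_mul z (g_smul c x) = g_smul c (g_mul z x)"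
  unfolding g_mul_def g_smul_def by (auto simp: algebra_simps sum_distrib_left)
lemma mul_zero_l: "g_mul g_zero z = g_zero"
  unfolding g_mul_def g_zero_def by auto
lemma mul_zero_r: "g_mul z g_zero = g_zero"
  unfolding g_mul_def g_zero_def by auto

lemma g_sum_two: "x \<noteq> y \<Longrightarrow> g_sum f {x, y} = g_add (f x) (f y)"
  unfolding g_sum_def g_add_def by auto

lemma gsign_empty: "gsign {} T = 1" unfolding gsign_def by simp

lemma gsign_ins:
  assumes "finite S" "finite T" "x \<notin> S"
  shows "gsign (insert x S) T = (-1) ^ card {t \<in> T. t < x} * gsign S T"
proof -
  have eq: "{(s, t). s \<in> insert x S \<and> t \<in> T \<and> t < s} =
     ({x} \<times> {t \<in> T. t < x}) \<union> {(s, t). s \<in> S \<and> t \<in> T \<and> t < s}" by auto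
  have f: "finite {(s, t). s \<in> S \<and> t \<in> T \<and> t < s}"
    by (rule finite_subset[of _ "S \<times> T"]) (use assms in auto)
  have "card {(s, t). s \<in> insert x S \<and> t \<in> T \<and> t < s} =
     card ({x} \<times> {t \<in> T. t < x}) + card {(s, t). s \<in> S \<and> t \<in> T \<and> t < s}"
    unfolding eq by (rule card_Un_disjoint) (use assms f in auto)
  then show ?thesis unfolding gsign_def by (simp add: power_add card_cartesian_product)
qed

lemma filt_ins: "{t \<in> insert z T. P t} = (if P z then insert z {t\<in>T. P t} else {t\<in>T. P t})"
  by auto
lemma c1: "card {t. t = x \<and> P t} = (if P x then 1 else 0)"
proof -
  have "{t. t = x \<and> P t} = (if P x then {x} else {})" by auto
  then show ?thesis by simp
qed
lemma c2: "x \<noteq> y \<Longrightarrow> card {t. (t = x \<or> t = y) \<and> P t} = (if P x then 1 else 0) + (if P y then 1 else 0)"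
proof -
  assume "x \<noteq> y"
  have "{t. (t = x \<or> t = y) \<and> P t} = {t. t = x \<and> P t} \<union> {t. t = y \<and> P t}" by auto
  moreover have "card ({t. t = x \<and> P t} \<union> {t. t = y \<and> P t}) = card {t. t = x \<and> P t} + card {t. t = y \<and> P t}"
    by (rule card_Un_disjoint) (use \<open>x \<noteq> y\<close> in auto)
  ultimately show ?thesis by (simp add: c1)
qed
lemma filt_empty: "{t \<in> {}. P t} = {}" by auto

lemma small_case:
  fixes a b :: "'a::linorder"
  assumes ab: "a < b"
  shows "g_mul (fA lam {a, b}) (fA lam {a, b}) = g_zero"
proof -
  have nab: "a \<noteq> b" "b \<noteq> a" using ab by auto
  have ba: "\<not> b < a" "\<not> b \<le> a" using ab by auto
  have pairs: "{(i, j). i \<in> {a, b} \<and> j \<in> {a, b} \<and> i \<noteq> j} = {(a, b), (b, a)}" using nab by auto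
  have sl: "sorted_list_of_set {a, b} = [a, b]" using ab by (simp add: less_imp_le)
  have d1: "{a, b} - {a} = {b}" "{a, b} - {b} = {a}" "{a, b} - {a, b} = {}" "{a, b} - {b, a} = {}"
    using nab by auto
  have nq: "(a,False) \<noteq> (a,True)" "(a,True) \<noteq> (a,False)" "(a,False) \<noteq> (b,False)" "(b,False) \<noteq> (a,False)"
    "(a,False) \<noteq> (b,True)" "(b,True) \<noteq> (a,False)" "(a,True) \<noteq> (b,False)" "(b,False) \<noteq> (a,True)"
    "(a,True) \<noteq> (b,True)" "(b,True) \<noteq> (a,True)" "(b,False) \<noteq> (b,True)" "(b,True) \<noteq> (b,False)"
    using nab by auto
  have lt: "(a,False) < (a,True)" "(a,False) < (b,False)" "(a,False) < (b,True)"
     "(a,True) < (b,False)" "(a,True) < (b,True)" "(b,False) < (b,True)"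
    using ab by auto
  have nlt: "\<not> (a,True) < (a,False)" "\<not> (b,False) < (a,False)" "\<not> (b,True) < (a,False)"
     "\<not> (b,False) < (a,True)" "\<not> (b,True) < (a,True)" "\<not> (b,True) < (b,False)"
    using lt by (auto simp del: less_prod_simp)
  let ?G = "g_add (g_smul (-lam) (e {(a,False),(a,True),(b,False),(b,True)}))
     (g_add (g_smul (-1) (e {(a,False),(a,True)})) (g_add (g_smul (-1) (e {(b,False),(b,True)}))
     (g_add (g_smul (-1) (e {(a,True),(b,False)})) (e {(a,False),(b,True)}))))"
  have G: "fA lam {a, b} = ?G"
    unfolding fA_def pairs
    apply (simp add: g_sum_two nab d1)
    apply (simp add: tau_def sl psi_def psibar_def gen_e one_e mul_e nq mul_smul_l mul_smul_r mul_zero_l mul_zero_r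
        gsign_ins gsign_empty c1 c2 ab ba nab)
    apply (rule ext)
    apply (simp add: g_add_def g_diff_def g_smul_def e_def insert_commute nq)
    done
  show ?thesis
    unfolding G
    apply (simp add: mul_add_l mul_add_r mul_diff_l mul_diff_r mul_smul_l mul_smul_r mul_zero_l mul_zero_r mul_e nq
      gsign_ins gsign_empty c1 c2 ab ba nab)
    apply (rule ext)
    apply (simp add: g_add_def g_diff_def g_smul_def e_def insert_commute nq g_zero_def)
    done
qed

theorem corollary4p2:
  fixes V :: "'a::linorder set" and A :: "'a set" and lam :: complex
  assumes "finite V" and "A \<subseteq> V" and "card A \<ge> 2"
  shows "g_mul (fA lam A) (fA lam A) = g_zero"
proof -
  have fin: "finite A" using assms finite_subset by blast
  show ?thesis
  proof (cases "card A = 2")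
    case True
    then obtain a b where A: "A = {a, b}" "a \<noteq> b" by (meson card_2_iff)
    show ?thesis
    proof (cases "a < b")
      case True
      then show ?thesis using A small_case by blast
    next
      case False
      then have "b < a" using A by auto
      moreover have "A = {b, a}" using A by auto
      ultimately show ?thesis using small_case by metis
    qed
  next
    case False
    then have "card A \<ge> 3" using assms(3) by simp
    then show ?thesis using big_case fin by blast
  qed
qed

end
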